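(* Let $m_0>0$ and $U_0>0$ with $m_0\le U_0$. There exist parameters $\eta>0$ and $\alpha\in[0,1]$, depending only on $m_0,U_0,d$, such that the fixed-share algorithm with these parameters satisfies the following: for all $T\ge1$, all loss vectors $\ell_1,\dots,\ell_T\in[0,1]^d$, and all $u_1,\dots,u_T\in\mathbb R_+^d$ with $\|u_1\|_1+m(u_1^T)\le m_0$ and $\sum_{t=1}^T\|u_t\|_1\le U_0$, \[ \sum_{t=1}^T\|u_t\|_1\hat p_t^\top\ell_t-\sum_{t=1}^Tu_t^\top\ell_t\le\sqrt{\frac{U_0}{2}\Big(m_0\ln d+U_0\,h\Big(\frac{m_0}{U_0}\Big)\Big)}\le\sqrt{\frac{U_0m_0}{2}\Big(\ln d+\ln\frac{eU_0}{m_0}\Big)}. \]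
   Context: Let $d\ge1$ and $\Delta_d=\{q\in[0,1]^d:\sum_{i=1}^d q_i=1\}$. The generalized share algorithm with learning rate $\eta>0$ and mixing functions $\psi_t:[0,1]^{td}\to\Delta_d$ ($t\ge2$) works as follows: $\hat p_1=v_1=(1/d,\dots,1/d)$. At each round $t=1,2,\dots$ it predicts $\hat p_t=(\hat p_{1,t},\dots,\hat p_{d,t})\in\Delta_d$, observes a loss vector $\ell_t=(\ell_{1,t},\dots,\ell_{d,t})\in[0,1]^d$ (arbitrary), and suffers loss $\hat p_t^\top\ell_t$. It then forms the pre-weights $v_{j,t+1}=\hat p_{j,t}e^{-\eta\ell_{j,t}}/\sum_{i=1}^d\hat p_{i,t}e^{-\eta\ell_{i,t}}$ for $j=1,\dots,d$, sets $v_{t+1}=(v_{1,t+1},\dots,v_{d,t+1})$, and defines $\hat p_{t+1}=\psi_{t+1}(V_{t+1})$ where $V_{t+1}=[v_{i,s}]_{1\le i\le d,1\le s\le t+1}$ is the $d\times(t+1)$ matrix of all pre-weights so far. The fixed-share algorithm with parameters $\eta>0$, $\alpha\in[0,1]$ is the generalized share algorithm with the mixing rule $\hat p_{j,t+1}=\alpha/d+(1-\alpha)v_{j,t+1}$ for all $j$ and $t\ge1$. For $x,y\in\mathbb R_+^d$, $D_{\mathrm{TV}}(x,y)=\sum_{i:\,x_i\ge y_i}(x_i-y_i)$, and for $u_1,\dots,u_T\in\mathbb R_+^d$, $m(u_1^T)=\sum_{t=2}^T D_{\mathrm{TV}}(u_t,u_{t-1})$. $h(x)=-x\ln x-(1-x)\ln(1-x)$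 is the binary entropy on $[0,1]$ (with $0\ln0=0$). *)

theory Defs
  imports Complex_Main
begin

text \<open>Experts are indexed by 0..<d, rounds by 1,2,...; vectors are nat => real
  (only components i < d matter). Losses: l t i = loss of expert i at round t.\<close>

fun fs_pred :: "nat \<Rightarrow> real \<Rightarrow> real \<Rightarrow> (nat \<Rightarrow> nat \<Rightarrow> real) \<Rightarrow> nat \<Rightarrow> nat \<Rightarrow> real" where
  "fs_pred d \<eta> \<alpha> l 0 = (\<lambda>j. 1 / real d)"
| "fs_pred d \<eta> \<alpha> l (Suc 0) = (\<lambda>j. 1 / real d)"
| "fs_pred d \<eta> \<alpha> l (Suc (Suc t)) =
     (let p = fs_pred d \<eta> \<alpha> l (Suc t);
          Z = (\<Sum>i<d. p i * exp (- \<eta> * l (Suc t) i));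
          v = (\<lambda>j. p j * exp (- \<eta> * l (Suc t) j) / Z)
      in (\<lambda>j. \<alpha> / real d + (1 - \<alpha>) * v j))"

definition dTV :: "nat \<Rightarrow> (nat \<Rightarrow> real) \<Rightarrow> (nat \<Rightarrow> real) \<Rightarrow> real" where
  "dTV d x y = (\<Sum>i\<in>{i. i < d \<and> x i \<ge> y i}. x i - y i)"

definition shifts :: "nat \<Rightarrow> (nat \<Rightarrow> nat \<Rightarrow> real) \<Rightarrow> nat \<Rightarrow> real" where
  "shifts d u T = (\<Sum>t=2..T. dTV d (u t) (u (t - 1)))"

definition norm1 :: "nat \<Rightarrow> (nat \<Rightarrow> real) \<Rightarrow> real" where
  "norm1 d x = (\<Sum>i<d. \<bar>x i\<bar>)"

definition bin_entropy :: "real \<Rightarrow> real" where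
  "bin_entropy x = (if x = 0 then 0 else - x * ln x) + (if x = 1 then 0 else - (1 - x) * ln (1 - x))"

end

theory Submission imports Defs "HOL-Probability.Hoeffding" begin

lemma ln_lower_2: fixes y :: real assumes "1 \<le> y" shows "2*(y-1)/(y+1) \<le> ln y"
proof -
  have "(\<lambda>x. ln x - 2*(x-1)/(x+1)) 1 \<le> (\<lambda>x. ln x - 2*(x-1)/(x+1)) y"
  proof (rule DERIV_nonneg_imp_nondecreasing[OF assms])
    fix x :: real assume x: "1 \<le> x" "x \<le> y"
    show "\<exists>y. ((\<lambda>x. ln x - 2*(x-1)/(x+1)) has_real_derivative y) (at x) \<and> 0 \<le> y"
    proof (intro exI conjI)
      show "((\<lambda>x. ln x - 2*(x-1)/(x+1)) has_real_derivative (1/x - 4/(x+1)^2)) (at x)"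
        using x by (auto intro!: derivative_eq_intros simp: field_simps power2_eq_square)
      have xp: "x > 0" "x + 1 > 0" using x by auto
      have "1/x - 4/(x+1)^2 = (x-1)^2/(x*(x+1)^2)" using xp by (simp add: divide_simps power2_eq_square; algebra)
      thus "0 \<le> 1/x - 4/(x+1)^2" using x by simp
    qed
  qed
  thus ?thesis by simp
qed

lemma hoeff_disc:
  fixes p l :: "nat \<Rightarrow> real" and \<eta> :: real
  assumes "\<eta> > 0" "\<And>i. i < d \<Longrightarrow> 0 \<le> p i" "(\<Sum>i<d. p i) = 1"
    "\<And>i. i < d \<Longrightarrow> 0 \<le> l i \<and> l i \<le> 1"
  shows "ln (\<Sum>i<d. p i * exp (-\<eta> * l i)) \<le> -\<eta> * (\<Sum>i<d. p i * l i) + \<eta>^2/8"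
proof -
  define q where "q = (\<Sum>i<d. p i * l i)"
  have q0: "0 \<le> q" unfolding q_def using assms by (auto intro!: sum_nonneg)
  have q1: "q \<le> 1" unfolding q_def using assms 
    by (metis (no_types, lifting) lessThan_iff mult_left_le sum_mono)
  have cv: "exp (-\<eta> * l i) \<le> 1 - l i + l i * exp (-\<eta>)" if "i < d" for i
  proof -
    have "exp ((1 - l i) *\<^sub>R 0 + l i *\<^sub>R (-\<eta>)) \<le> (1 - l i) * exp 0 + l i * exp (-\<eta>)"
      using convex_onD[OF convex_on_exp[of 1], of "l i" 0 "-\<eta>"] assms(4)[OF that] by simp
    thus ?thesis by (simp add: mult.commute)
  qed
  have "(\<Sum>i<d. p i * exp (-\<eta> * l i)) \<le> (\<Sum>i<d. p i * (1 - l i + l i * exp (-\<eta>)))"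
    by (intro sum_mono mult_left_mono) (use cv assms in auto)
  also have "\<dots> = 1 + q * (exp (-\<eta>) - 1)"
  proof -
    have "(\<Sum>i<d. p i * (1 - l i + l i * exp (-\<eta>))) = (\<Sum>i<d. p i) - (\<Sum>i<d. p i * l i) + exp (-\<eta>) * (\<Sum>i<d. p i * l i)"
      by (simp add: algebra_simps sum.distrib sum_subtractf sum_distrib_left)
    thus ?thesis using assms(3) by (simp add: q_def algebra_simps)
  qed
  also have "\<dots> = exp (-\<eta>) * (1 + (1 - q) * (exp \<eta> - 1))"
    by (simp add: algebra_simps exp_minus field_simps)
  finally have Z: "(\<Sum>i<d. p i * exp (-\<eta> * l i)) \<le> exp (-\<eta>) * (1 + (1 - q) * (exp \<eta> - 1))" .
  have pos1: "0 < 1 + (1 - q) * (exp \<eta> - 1)" using q1 assms(1)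
    by (smt (verit) mult_nonneg_nonneg one_le_exp_iff)
  have Zpos: "0 < (\<Sum>i<d. p i * exp (-\<eta> * l i))"
  proof -
    have "(\<Sum>i<d. p i) \<le> (\<Sum>i<d. p i * exp (-\<eta> * l i)) * exp \<eta>"
    proof -
      have "(\<Sum>i<d. p i) \<le> (\<Sum>i<d. p i * exp (-\<eta> * l i) * exp \<eta>)"
      proof (intro sum_mono)
        fix i assume "i \<in> {..<d}"
        hence "0 \<le> p i" "l i \<le> 1" using assms by auto
        hence "1 \<le> exp (-\<eta> * l i) * exp \<eta>" using assms(1) 
          by (simp add: exp_add[symmetric] mult_left_le)
        thus "p i \<le> p i * exp (-\<eta> * l i) * exp \<eta>" using \<open>0 \<le> p i\<close>
          by (metis mult.assoc mult_le_cancel_left1 order_less_le not_le)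
      qed
      thus ?thesis by (simp add: sum_distrib_right)
    qed
    thus ?thesis using assms(3) by (smt (verit) exp_gt_zero zero_less_mult_pos2)
  qed
  have "ln (\<Sum>i<d. p i * exp (-\<eta> * l i)) \<le> ln (exp (-\<eta>) * (1 + (1 - q) * (exp \<eta> - 1)))"
    using Z Zpos by simp
  also have "\<dots> = -\<eta> + ln (1 + (1 - q) * (exp \<eta> - 1))" using pos1 by (simp add: ln_mult)
  also have "ln (1 + (1 - q) * (exp \<eta> - 1)) \<le> \<eta> * (1 - q) + \<eta>^2/8"
    using Hoeffdings_lemma_aux[of \<eta> "1 - q"] assms(1) q1 by simp
  finally show ?thesis by (simp add: q_def algebra_simps)
qed


definition Zf where "Zf d \<eta> \<alpha> l t = (\<Sum>i<d. fs_pred d \<eta> \<alpha> l t i * exp (-\<eta> * l t i))"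
definition Vf where "Vf d \<eta> \<alpha> l t j = fs_pred d \<eta> \<alpha> l t j * exp (-\<eta> * l t j) / Zf d \<eta> \<alpha> l t"

lemma fs_Suc: "1 \<le> t \<Longrightarrow> fs_pred d \<eta> \<alpha> l (Suc t) = (\<lambda>j. \<alpha> / real d + (1 - \<alpha>) * Vf d \<eta> \<alpha> l t j)"
  by (cases t) (auto simp: Vf_def Zf_def Let_def)

lemma Zf_pos:
  assumes "d \<ge> 1" "\<And>j. fs_pred d \<eta> \<alpha> l t j > 0"
  shows "Zf d \<eta> \<alpha> l t > 0"
  unfolding Zf_def using assms by (intro sum_pos) (auto simp: lessThan_empty_iff)

lemma Vf_sum:
  assumes "d \<ge> 1" "\<And>j. fs_pred d \<eta> \<alpha> l t j > 0"
  shows "(\<Sum>j<d. Vf d \<eta> \<alpha> l t j) = 1"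
  using Zf_pos[OF assms] unfolding Vf_def by (simp add: sum_divide_distrib[symmetric] Zf_def)

lemma Vf_pos:
  assumes "d \<ge> 1" "\<And>j. fs_pred d \<eta> \<alpha> l t j > 0"
  shows "Vf d \<eta> \<alpha> l t j > 0"
  using Zf_pos[OF assms] assms(2)[of j] unfolding Vf_def by simp

lemma Vf_le1:
  assumes "d \<ge> 1" "\<And>j. fs_pred d \<eta> \<alpha> l t j > 0" "j < d"
  shows "Vf d \<eta> \<alpha> l t j \<le> 1"
proof -
  have "Vf d \<eta> \<alpha> l t j \<le> (\<Sum>j<d. Vf d \<eta> \<alpha> l t j)"
    using assms Vf_pos[OF assms(1,2)] by (intro member_le_sum) (auto intro: less_imp_le)
  thus ?thesis using Vf_sum[OF assms(1,2)] by simp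
qed

lemma fs_pos_sum:
  assumes "d \<ge> 1" "0 < \<alpha>" "\<alpha> \<le> 1" "1 \<le> t"
  shows "(\<forall>j. fs_pred d \<eta> \<alpha> l t j > 0) \<and> (\<Sum>j<d. fs_pred d \<eta> \<alpha> l t j) = 1"
  using assms(4)
proof (induction t rule: nat_induct_at_least)
  case base
  then show ?case using assms by (simp add: Suc_le_eq)
next
  case (Suc n)
  hence pos: "\<And>j. fs_pred d \<eta> \<alpha> l n j > 0" by auto
  have "\<forall>j. fs_pred d \<eta> \<alpha> l (Suc n) j > 0"
  proof
    fix j
    have "0 < \<alpha> / real d" using assms by simp
    moreover have "0 \<le> (1 - \<alpha>) * Vf d \<eta> \<alpha> l n j" using Vf_pos[OF assms(1) pos, of j] assms by simp
    ultimately show "fs_pred d \<eta> \<alpha> l (Suc n) j > 0" using fs_Suc[OF Suc(1)] by simp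
  qed
  moreover have "(\<Sum>j<d. fs_pred d \<eta> \<alpha> l (Suc n) j) = 1"
    using fs_Suc[OF Suc(1)] Vf_sum[OF assms(1) pos] assms(1)
    by (simp add: sum.distrib sum_distrib_left[symmetric])
  ultimately show ?case by simp
qed


lemma round_bound:
  fixes p l u :: "nat \<Rightarrow> real" and \<eta> :: real
  assumes eta: "\<eta> > 0" and pp: "\<And>i. i < d \<Longrightarrow> 0 < p i" and ps: "(\<Sum>i<d. p i) = 1"
    and lb: "\<And>i. i < d \<Longrightarrow> 0 \<le> l i \<and> l i \<le> 1" and un: "\<And>i. i < d \<Longrightarrow> 0 \<le> u i"
    and Z: "Z = (\<Sum>i<d. p i * exp (-\<eta> * l i))"
  shows "(\<Sum>i<d. u i) * (\<Sum>i<d. p i * l i) - (\<Sum>i<d. u i * l i)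
     \<le> \<eta> * (\<Sum>i<d. u i) / 8 + (\<Sum>i<d. u i * (ln (p i * exp (-\<eta> * l i) / Z) - ln (p i))) / \<eta>"
proof -
  have ne: "{..<d} \<noteq> {}" using ps by auto
  have Zp: "Z > 0" unfolding Z using ne pp by (intro sum_pos) auto
  have H: "ln Z \<le> -\<eta> * (\<Sum>i<d. p i * l i) + \<eta>^2/8"
    unfolding Z by (rule hoeff_disc) (use eta pp ps lb less_imp_le in auto)
  have lnv: "ln (p i * exp (-\<eta> * l i) / Z) - ln (p i) = -\<eta> * l i - ln Z" if "i < d" for i
    using pp[OF that] Zp by (simp add: ln_div ln_mult)
  have "(\<Sum>i<d. u i * (ln (p i * exp (-\<eta> * l i) / Z) - ln (p i))) = (\<Sum>i<d. u i * (-\<eta> * l i - ln Z))"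
    by (rule sum.cong[OF refl]) (metis lessThan_iff lnv)
  also have "\<dots> = -\<eta> * (\<Sum>i<d. u i * l i) - (\<Sum>i<d. u i) * ln Z"
    by (simp add: algebra_simps sum_subtractf sum_distrib_left sum_distrib_right)
  finally have E: "(\<Sum>i<d. u i * (ln (p i * exp (-\<eta> * l i) / Z) - ln (p i))) / \<eta>
      = - (\<Sum>i<d. u i * l i) - (\<Sum>i<d. u i) * ln Z / \<eta>" using eta by (simp add: field_simps)
  have "(\<Sum>i<d. p i * l i) \<le> \<eta>/8 - ln Z / \<eta>"
    using H eta by (simp add: field_simps power2_eq_square)
  hence "(\<Sum>i<d. u i) * (\<Sum>i<d. p i * l i) \<le> (\<Sum>i<d. u i) * (\<eta>/8 - ln Z / \<eta>)"
    by (intro mult_left_mono sum_nonneg) (use un in auto)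
  thus ?thesis unfolding E by (simp add: algebra_simps)
qed


lemma coord:
  fixes a b LV LP Ad Bc :: real
  assumes "0 \<le> a" "0 \<le> b" "LV \<le> 0" "LV - LP \<le> Bc" "- LP \<le> Ad"
  shows "a * LV - b * LP \<le> (if a \<le> b then b - a else 0) * Ad + (b - (if a \<le> b then b - a else 0)) * Bc"
proof (cases "a \<le> b")
  case True
  have "a * (LV - LP) \<le> a * Bc" using assms by (intro mult_left_mono) auto
  moreover have "(b - a) * (- LP) \<le> (b - a) * Ad" using assms True by (intro mult_left_mono) auto
  ultimately show ?thesis using True by (simp add: algebra_simps)
next
  case False
  have "b * (LV - LP) \<le> b * Bc" using assms by (intro mult_left_mono) auto
  moreover have "(a - b) * LV \<le> 0" using assms False by (simp add: mult_nonneg_nonpos)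
  ultimately show ?thesis using False by (simp add: algebra_simps)
qed

lemma dTV_sum: "dTV d x y = (\<Sum>i<d. if y i \<le> x i then x i - y i else 0)"
proof -
  have eq: "{i. i < d \<and> x i \<ge> y i} = {i \<in> {..<d}. y i \<le> x i}" by auto
  show ?thesis unfolding dTV_def eq by (rule sum.inter_filter) simp
qed

lemma step_bound:
  assumes d1: "d \<ge> 1" and a0: "0 < \<alpha>" and a1: "\<alpha> < 1" and T: "1 \<le> T"
    and an: "\<And>j. j < d \<Longrightarrow> 0 \<le> a j" and bn: "\<And>j. j < d \<Longrightarrow> 0 \<le> b j"
  shows "(\<Sum>j<d. a j * ln (Vf d \<eta> \<alpha> l T j) - b j * ln (fs_pred d \<eta> \<alpha> l (Suc T) j))
     \<le> dTV d b a * ln (real d / \<alpha>) + ((\<Sum>j<d. b j) - dTV d b a) * ln (1 / (1 - \<alpha>))"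
proof -
  have pos: "\<And>j. fs_pred d \<eta> \<alpha> l T j > 0" using fs_pos_sum[OF d1 a0 _ T, of \<eta> l] a1 by auto
  let ?V = "Vf d \<eta> \<alpha> l T" and ?P = "fs_pred d \<eta> \<alpha> l (Suc T)"
  let ?c = "\<lambda>j. if a j \<le> b j then b j - a j else 0"
  have "(\<Sum>j<d. a j * ln (?V j) - b j * ln (?P j))
     \<le> (\<Sum>j<d. ?c j * ln (real d / \<alpha>) + (b j - ?c j) * ln (1 / (1 - \<alpha>)))"
  proof (intro sum_mono coord)
    fix j assume j: "j \<in> {..<d}"
    show "0 \<le> a j" "0 \<le> b j" using j an bn by auto
    have V0: "?V j > 0" using Vf_pos[OF d1 pos] .
    show "ln (?V j) \<le> 0" using Vf_le1[OF d1 pos] j V0 by simp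
    have P: "?P j = \<alpha> / real d + (1 - \<alpha>) * ?V j" using fs_Suc[OF T] by simp
    have P1: "(1 - \<alpha>) * ?V j \<le> ?P j" using P a0 by simp
    have P2: "\<alpha> / real d \<le> ?P j" using P a1 V0 by simp
    have Ppos: "?P j > 0" proof -
      have "0 < \<alpha> / real d" using a0 d1 by simp
      thus ?thesis using P2 by linarith
    qed
    have "?V j / ?P j \<le> 1 / (1 - \<alpha>)" using P1 Ppos a1 by (simp add: field_simps)
    hence "ln (?V j / ?P j) \<le> ln (1 / (1 - \<alpha>))" using V0 Ppos by (simp del: ln_le_cancel_iff add: ln_mono)
    thus "ln (?V j) - ln (?P j) \<le> ln (1 / (1 - \<alpha>))" using V0 Ppos by (simp add: ln_div)
    have "ln (\<alpha> / real d) \<le> ln (?P j)" using P2 a0 d1 by (intro ln_mono) auto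
    thus "- ln (?P j) \<le> ln (real d / \<alpha>)" using a0 d1 by (simp add: ln_div)
  qed
  also have "\<dots> = (\<Sum>j<d. ?c j) * ln (real d / \<alpha>) + ((\<Sum>j<d. b j) - (\<Sum>j<d. ?c j)) * ln (1 / (1 - \<alpha>))"
    by (simp add: sum.distrib sum_distrib_right sum_distrib_left sum_subtractf algebra_simps)
  also have "(\<Sum>j<d. ?c j) = dTV d b a" by (simp add: dTV_sum)
  finally show ?thesis .
qed


lemma tele:
  assumes d1: "d \<ge> 1" and a0: "0 < \<alpha>" and a1: "\<alpha> < 1"
    and un: "\<forall>t\<in>{1..N}. \<forall>i<d. 0 \<le> u t i"
  shows "1 \<le> T \<Longrightarrow> T \<le> N \<Longrightarrow>
    (\<Sum>t=1..T. \<Sum>j<d. u t j * (ln (Vf d \<eta> \<alpha> l t j) - ln (fs_pred d \<eta> \<alpha> l t j)))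
    \<le> (\<Sum>j<d. u 1 j) * ln (real d)
      + (\<Sum>t=2..T. dTV d (u t) (u (t-1)) * ln (real d / \<alpha>)
           + ((\<Sum>j<d. u t j) - dTV d (u t) (u (t-1))) * ln (1 / (1 - \<alpha>)))
      + (\<Sum>j<d. u T j * ln (Vf d \<eta> \<alpha> l T j))"
proof (induction T rule: nat_induct_at_least)
  case base
  have "(\<Sum>j<d. u 1 j * (ln (Vf d \<eta> \<alpha> l 1 j) - ln (fs_pred d \<eta> \<alpha> l 1 j)))
     = (\<Sum>j<d. u 1 j * ln (Vf d \<eta> \<alpha> l 1 j) + u 1 j * ln (real d))"
    using d1 by (intro sum.cong refl) (simp add: ln_div algebra_simps)
  then show ?case by (simp add: sum.distrib sum_distrib_right)
next
  case (Suc T)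
  let ?L = "\<lambda>t. (\<Sum>j<d. u t j * (ln (Vf d \<eta> \<alpha> l t j) - ln (fs_pred d \<eta> \<alpha> l t j)))"
  let ?G = "\<lambda>t. dTV d (u t) (u (t-1)) * ln (real d / \<alpha>)
           + ((\<Sum>j<d. u t j) - dTV d (u t) (u (t-1))) * ln (1 / (1 - \<alpha>))"
  have IH: "(\<Sum>t=1..T. ?L t) \<le> (\<Sum>j<d. u 1 j) * ln (real d) + (\<Sum>t=2..T. ?G t)
      + (\<Sum>j<d. u T j * ln (Vf d \<eta> \<alpha> l T j))" using Suc by simp
  have s1: "(\<Sum>t=1..Suc T. ?L t) = (\<Sum>t=1..T. ?L t) + ?L (Suc T)" by simp
  have s2: "(\<Sum>t=2..Suc T. ?G t) = (\<Sum>t=2..T. ?G t) + ?G (Suc T)" using Suc(1) by simp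
  have SB: "(\<Sum>j<d. u T j * ln (Vf d \<eta> \<alpha> l T j) - u (Suc T) j * ln (fs_pred d \<eta> \<alpha> l (Suc T) j)) \<le> ?G (Suc T)"
    using step_bound[OF d1 a0 a1 Suc(1), of "u T" "u (Suc T)" \<eta> l] un Suc by auto
  have eq: "(\<Sum>j<d. u T j * ln (Vf d \<eta> \<alpha> l T j)) + ?L (Suc T)
     = (\<Sum>j<d. u T j * ln (Vf d \<eta> \<alpha> l T j) - u (Suc T) j * ln (fs_pred d \<eta> \<alpha> l (Suc T) j))
       + (\<Sum>j<d. u (Suc T) j * ln (Vf d \<eta> \<alpha> l (Suc T) j))"
    by (simp add: sum.distrib sum_subtractf algebra_simps)
  show ?case unfolding s1 s2 using IH SB eq by linarith
qed


lemma final_alg: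
  fixes s m W m0 U0 Ld A Bc :: real
  assumes "0 \<le> s" "0 \<le> m" "s + m \<le> m0" "s + W \<le> U0" "0 \<le> Ld" "0 \<le> A" "0 \<le> Bc" "0 \<le> Ld + A - Bc"
  shows "s * Ld + m * (Ld + A) + (W - m) * Bc \<le> m0 * Ld + m0 * A + (U0 - m0) * Bc"
proof -
  have "s * Ld + m * (Ld + A) + (W - m) * Bc \<le> (s+m) * Ld + (s+m) * A + (U0 - (s+m)) * Bc"
  proof -
    have "m * A \<le> (s+m) * A" using assms by (intro mult_right_mono) auto
    moreover have "(W - m) * Bc \<le> (U0 - (s+m)) * Bc" using assms by (intro mult_right_mono) auto
    ultimately show ?thesis by (simp add: algebra_simps)
  qed
  also have "\<dots> = (s+m) * (Ld + A - Bc) + U0 * Bc" by (simp add: algebra_simps)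
  also have "\<dots> \<le> m0 * (Ld + A - Bc) + U0 * Bc" using assms by (intro add_right_mono mult_right_mono) auto
  also have "\<dots> = m0 * Ld + m0 * A + (U0 - m0) * Bc" by (simp add: algebra_simps)
  finally show ?thesis .
qed

lemma main_fixed:
  assumes d1: "d \<ge> 1" and a0: "0 < \<alpha>" and a1: "\<alpha> < 1" and eta: "\<eta> > 0"
    and ad: "\<alpha> * (real d + 1) \<le> real d"
    and T: "T \<ge> 1"
    and lb: "\<forall>t\<in>{1..T}. \<forall>i<d. 0 \<le> l t i \<and> l t i \<le> 1"
    and un: "\<forall>t\<in>{1..T}. \<forall>i<d. 0 \<le> u t i"
    and hm: "norm1 d (u 1) + shifts d u T \<le> m0"
    and hU: "(\<Sum>t=1..T. norm1 d (u t)) \<le> U0"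
  shows "(\<Sum>t=1..T. norm1 d (u t) * (\<Sum>i<d. fs_pred d \<eta> \<alpha> l t i * l t i))
         - (\<Sum>t=1..T. \<Sum>i<d. u t i * l t i)
     \<le> \<eta> * U0 / 8 + (m0 * ln (real d) + m0 * ln (1/\<alpha>) + (U0 - m0) * ln (1 / (1 - \<alpha>))) / \<eta>"
proof -
  let ?p = "fs_pred d \<eta> \<alpha> l" and ?V = "Vf d \<eta> \<alpha> l"
  let ?L = "\<lambda>t. (\<Sum>j<d. u t j * (ln (?V t j) - ln (?p t j)))"
  have nrm: "norm1 d (u t) = (\<Sum>j<d. u t j)" if "t \<in> {1..T}" for t
    unfolding norm1_def using un that by (intro sum.cong) auto
  have R: "norm1 d (u t) * (\<Sum>i<d. ?p t i * l t i) - (\<Sum>i<d. u t i * l t i)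
       \<le> \<eta> * norm1 d (u t) / 8 + ?L t / \<eta>" if t: "t \<in> {1..T}" for t
  proof -
    have ps: "(\<forall>j. ?p t j > 0) \<and> (\<Sum>j<d. ?p t j) = 1" using fs_pos_sum[OF d1 a0] a1 t by auto
    have "(\<Sum>i<d. u t i) * (\<Sum>i<d. ?p t i * l t i) - (\<Sum>i<d. u t i * l t i)
      \<le> \<eta> * (\<Sum>i<d. u t i) / 8 + (\<Sum>i<d. u t i * (ln (?p t i * exp (-\<eta> * l t i) / Zf d \<eta> \<alpha> l t) - ln (?p t i))) / \<eta>"
      by (rule round_bound[OF eta]) (use ps lb un t in \<open>auto simp: Zf_def\<close>)
    thus ?thesis using nrm[OF t] by (simp add: Vf_def)
  qed
  have "(\<Sum>t=1..T. norm1 d (u t) * (\<Sum>i<d. ?p t i * l t i)) - (\<Sum>t=1..T. \<Sum>i<d. u t i * l t i)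
      = (\<Sum>t=1..T. norm1 d (u t) * (\<Sum>i<d. ?p t i * l t i) - (\<Sum>i<d. u t i * l t i))"
    by (simp add: sum_subtractf)
  also have "\<dots> \<le> (\<Sum>t=1..T. \<eta> * norm1 d (u t) / 8 + ?L t / \<eta>)"
    by (intro sum_mono R)
  also have "\<dots> = \<eta> / 8 * (\<Sum>t=1..T. norm1 d (u t)) + (\<Sum>t=1..T. ?L t) / \<eta>"
    by (simp add: sum.distrib sum_distrib_left sum_divide_distrib)
  also have "\<dots> \<le> \<eta> / 8 * U0 + (m0 * ln (real d) + m0 * ln (1/\<alpha>) + (U0 - m0) * ln (1 / (1 - \<alpha>))) / \<eta>"
  proof (intro add_mono mult_left_mono divide_right_mono hU)
    show "0 \<le> \<eta> / 8" "0 \<le> \<eta>" using eta by auto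
    let ?G = "\<lambda>t. dTV d (u t) (u (t-1)) * ln (real d / \<alpha>)
           + ((\<Sum>j<d. u t j) - dTV d (u t) (u (t-1))) * ln (1 / (1 - \<alpha>))"
    have TL: "(\<Sum>t=1..T. ?L t) \<le> (\<Sum>j<d. u 1 j) * ln (real d) + (\<Sum>t=2..T. ?G t)
      + (\<Sum>j<d. u T j * ln (?V T j))"
      by (rule tele[OF d1 a0 a1 un T order.refl])
    have last: "(\<Sum>j<d. u T j * ln (?V T j)) \<le> 0"
    proof (intro sum_nonpos mult_nonneg_nonpos)
      fix j assume j: "j \<in> {..<d}"
      have ps: "\<And>j. ?p T j > 0" using fs_pos_sum[OF d1 a0 _ T] a1 by auto
      show "0 \<le> u T j" using un j T by auto
      show "ln (?V T j) \<le> 0" using Vf_le1[OF d1 ps] Vf_pos[OF d1 ps] j by simp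
    qed
    define s where "s = norm1 d (u 1)"
    define m where "m = shifts d u T"
    define W where "W = (\<Sum>t=2..T. norm1 d (u t))"
    have s_eq: "(\<Sum>j<d. u 1 j) = s" unfolding s_def using nrm[of 1] T by simp
    have G_eq: "(\<Sum>t=2..T. ?G t) = m * ln (real d / \<alpha>) + (W - m) * ln (1 / (1 - \<alpha>))"
    proof -
      have "(\<Sum>t=2..T. ?G t) = (\<Sum>t=2..T. dTV d (u t) (u (t-1)) * ln (real d / \<alpha>)
           + (norm1 d (u t) - dTV d (u t) (u (t-1))) * ln (1 / (1 - \<alpha>)))"
        by (intro sum.cong refl) (simp add: nrm)
      thus ?thesis unfolding m_def W_def shifts_def
        by (simp add: sum.distrib sum_subtractf sum_distrib_right sum_distrib_left algebra_simps)
    qed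
    have sW: "s + W = (\<Sum>t=1..T. norm1 d (u t))" unfolding s_def W_def
      using sum.atLeast_Suc_atMost[OF T, of "\<lambda>t. norm1 d (u t)"] by (simp add: numeral_2_eq_2)
    have s0: "0 \<le> s" unfolding s_def norm1_def by (simp add: sum_nonneg)
    have m0': "0 \<le> m" unfolding m_def shifts_def dTV_def by (intro sum_nonneg) auto
    have lnda: "ln (real d / \<alpha>) = ln (real d) + ln (1/\<alpha>)" using a0 d1 by (simp add: ln_div)
    have "(\<Sum>t=1..T. ?L t) \<le> s * ln (real d) + m * (ln (real d) + ln (1/\<alpha>)) + (W - m) * ln (1 / (1 - \<alpha>))"
      using TL last s_eq G_eq lnda by simp
    also have "\<dots> \<le> m0 * ln (real d) + m0 * ln (1/\<alpha>) + (U0 - m0) * ln (1 / (1 - \<alpha>))"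
    proof (rule final_alg)
      show "0 \<le> s" "0 \<le> m" by fact+
      show "s + m \<le> m0" using hm unfolding s_def m_def .
      show "s + W \<le> U0" using hU sW by simp
      show "0 \<le> ln (real d)" using d1 by simp
      show "0 \<le> ln (1/\<alpha>)" using a0 a1 by simp
      show "0 \<le> ln (1 / (1 - \<alpha>))" using a0 a1 by simp
      have "ln (real d) + ln (1/\<alpha>) - ln (1 / (1 - \<alpha>)) = ln (real d * (1 - \<alpha>) / \<alpha>)"
        using a0 a1 d1 by (simp add: ln_div ln_mult)
      moreover have "1 \<le> real d * (1 - \<alpha>) / \<alpha>" using ad a0 by (simp add: field_simps)
      ultimately show "0 \<le> ln (real d) + ln (1/\<alpha>) - ln (1 / (1 - \<alpha>))" by simp
    qed
    finally show "(\<Sum>t=1..T. ?L t) \<le> m0 * ln (real d) + m0 * ln (1/\<alpha>) + (U0 - m0) * ln (1 / (1 - \<alpha>))" .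
  qed
  finally show ?thesis by (simp add: algebra_simps)
qed


lemma fs_uniform: "fs_pred d \<eta> 1 l t = (\<lambda>j. 1 / real d)"
proof (cases t)
  case (Suc k) thus ?thesis by (cases k) (auto simp: Let_def)
qed simp

lemma avg_bound:
  fixes l :: "nat \<Rightarrow> real"
  assumes "j < d" "\<And>i. i < d \<Longrightarrow> 0 \<le> l i \<and> l i \<le> 1"
  shows "(\<Sum>i<d. l i) / real d - l j \<le> 1 - 1 / real d"
proof -
  have "(\<Sum>i<d. l i) = l j + (\<Sum>i\<in>{..<d} - {j}. l i)"
    using assms(1) by (simp add: sum.remove)
  also have "(\<Sum>i\<in>{..<d} - {j}. l i) \<le> real (card ({..<d} - {j})) * 1"
    by (rule sum_bounded_above) (use assms(2) in auto)
  also have "card ({..<d} - {j}) = d - 1" using assms(1) by simp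
  finally have S: "(\<Sum>i<d. l i) \<le> l j + real (d - 1)" by simp
  have d0: "real d > 0" using assms(1) by simp
  have "(\<Sum>i<d. l i) / real d - l j \<le> (l j + real (d - 1)) / real d - l j"
    using S d0 by (simp add: divide_right_mono)
  also have "\<dots> = 1 - 1 / real d - l j * (1 - 1 / real d)"
    using assms(1) d0 by (simp add: field_simps of_nat_diff)
  also have "\<dots> \<le> 1 - 1 / real d"
    using assms d0 by (simp add: mult_nonneg_nonneg)
  finally show ?thesis .
qed

lemma uniform_regret:
  assumes d1: "d \<ge> 1"
    and lb: "\<forall>t\<in>{1..T}. \<forall>i<d. 0 \<le> l t i \<and> l t i \<le> 1"
    and un: "\<forall>t\<in>{1..T}. \<forall>i<d. 0 \<le> u t i"
    and hU: "(\<Sum>t=1..T. norm1 d (u t)) \<le> U0"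
  shows "(\<Sum>t=1..T. norm1 d (u t) * (\<Sum>i<d. fs_pred d \<eta> 1 l t i * l t i))
         - (\<Sum>t=1..T. \<Sum>i<d. u t i * l t i) \<le> (1 - 1 / real d) * U0"
proof -
  have R: "norm1 d (u t) * (\<Sum>i<d. fs_pred d \<eta> 1 l t i * l t i) - (\<Sum>i<d. u t i * l t i)
      \<le> (1 - 1 / real d) * norm1 d (u t)" if t: "t \<in> {1..T}" for t
  proof -
    have nrm: "norm1 d (u t) = (\<Sum>j<d. u t j)"
      unfolding norm1_def using un t by (intro sum.cong) auto
    have "norm1 d (u t) * (\<Sum>i<d. fs_pred d \<eta> 1 l t i * l t i) - (\<Sum>i<d. u t i * l t i)
        = (\<Sum>j<d. u t j * ((\<Sum>i<d. l t i) / real d - l t j))"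
      unfolding nrm fs_uniform
      by (simp add: sum_distrib_right sum_subtractf algebra_simps sum_divide_distrib)
    also have "\<dots> \<le> (\<Sum>j<d. u t j * (1 - 1 / real d))"
      by (intro sum_mono mult_left_mono avg_bound) (use lb un t in auto)
    also have "\<dots> = (1 - 1 / real d) * norm1 d (u t)"
      unfolding nrm by (simp add: sum_distrib_right mult.commute)
    finally show ?thesis .
  qed
  have "(\<Sum>t=1..T. norm1 d (u t) * (\<Sum>i<d. fs_pred d \<eta> 1 l t i * l t i))
         - (\<Sum>t=1..T. \<Sum>i<d. u t i * l t i)
      = (\<Sum>t=1..T. norm1 d (u t) * (\<Sum>i<d. fs_pred d \<eta> 1 l t i * l t i) - (\<Sum>i<d. u t i * l t i))"
    by (simp add: sum_subtractf)
  also have "\<dots> \<le> (\<Sum>t=1..T. (1 - 1 / real d) * norm1 d (u t))" by (intro sum_mono R)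
  also have "\<dots> = (1 - 1 / real d) * (\<Sum>t=1..T. norm1 d (u t))" by (simp add: sum_distrib_left)
  also have "\<dots> \<le> (1 - 1 / real d) * U0"
    using hU d1 by (intro mult_left_mono) (auto simp: field_simps)
  finally show ?thesis .
qed


lemma entropy_eq:
  fixes x :: real assumes "0 < x" "x < 1"
  shows "bin_entropy x = - x * ln x - (1 - x) * ln (1 - x)"
  using assms by (simp add: bin_entropy_def algebra_simps)

theorem corollary1:
  fixes d :: nat and m0 U0 :: real
  assumes "d \<ge> 1" and "m0 > 0" and "U0 > 0" and "m0 \<le> U0"
  shows "\<exists>\<eta>>0. \<exists>\<alpha>. 0 \<le> \<alpha> \<and> \<alpha> \<le> 1 \<and>
    (\<forall>T (l :: nat \<Rightarrow> nat \<Rightarrow> real) (u :: nat \<Rightarrow> nat \<Rightarrow> real).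
       T \<ge> 1
       \<and> (\<forall>t\<in>{1..T}. \<forall>i<d. 0 \<le> l t i \<and> l t i \<le> 1)
       \<and> (\<forall>t\<in>{1..T}. \<forall>i<d. 0 \<le> u t i)
       \<and> norm1 d (u 1) + shifts d u T \<le> m0
       \<and> (\<Sum>t=1..T. norm1 d (u t)) \<le> U0
     \<longrightarrow>
       (\<Sum>t=1..T. norm1 d (u t) * (\<Sum>i<d. fs_pred d \<eta> \<alpha> l t i * l t i))
         - (\<Sum>t=1..T. \<Sum>i<d. u t i * l t i)
         \<le> sqrt (U0 / 2 * (m0 * ln (real d) + U0 * bin_entropy (m0 / U0)))
       \<and> sqrt (U0 / 2 * (m0 * ln (real d) + U0 * bin_entropy (m0 / U0)))
         \<le> sqrt (U0 * m0 / 2 * (ln (real d) + ln (exp 1 * U0 / m0))))"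
proof -
  note d1 = assms(1) and m0p = assms(2) and U0p = assms(3) and mU = assms(4)
  define x where "x = m0 / U0"
  have x0: "0 < x" and x1: "x \<le> 1" unfolding x_def using assms by auto
  have m0x: "m0 = U0 * x" unfolding x_def using U0p by simp
  define B where "B = m0 * ln (real d) + U0 * bin_entropy x"
  have lnd: "0 \<le> ln (real d)" using d1 by simp
  have SECOND: "sqrt (U0 / 2 * B) \<le> sqrt (U0 * m0 / 2 * (ln (real d) + ln (exp 1 * U0 / m0)))"
  proof -
    have lnU: "ln (exp 1 * U0 / m0) = 1 + ln (U0 / m0)"
      using m0p U0p by (simp add: ln_mult ln_div)
    have hb: "U0 * bin_entropy x \<le> m0 * (1 + ln (U0 / m0))"
    proof (cases "x = 1")
      case True
      hence "m0 = U0" using m0x by simp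
      thus ?thesis using True m0p by (simp add: bin_entropy_def)
    next
      case False
      hence xl: "x < 1" using x1 by simp
      have e1: "U0 * (- x * ln x) = m0 * ln (U0 / m0)"
        using m0x x0 U0p by (simp add: ln_div x_def algebra_simps)
      have "- ln (1 - x) = ln (1 / (1 - x))" using xl by (simp add: ln_div)
      also have "\<dots> \<le> 1 / (1 - x) - 1" using xl by (intro ln_le_minus_one) simp
      finally have "- ln (1 - x) \<le> x / (1 - x)" using xl by (simp add: field_simps)
      hence "(1 - x) * (- ln (1 - x)) \<le> (1 - x) * (x / (1 - x))" using xl by (intro mult_left_mono) auto
      moreover have "(1 - x) * (x / (1 - x)) = x" using xl by simp
      ultimately have "- (1 - x) * ln (1 - x) \<le> x" by (simp add: algebra_simps)
      hence e2: "U0 * (- (1 - x) * ln (1 - x)) \<le> m0" using m0x U0p by (simp add: mult_left_mono)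
      have "U0 * bin_entropy x = U0 * (- x * ln x) + U0 * (- (1 - x) * ln (1 - x))"
        unfolding entropy_eq[OF x0 xl] by (simp add: algebra_simps)
      thus ?thesis using e1 e2 by (simp add: algebra_simps)
    qed
    have "U0 / 2 * B \<le> U0 * m0 / 2 * (ln (real d) + ln (exp 1 * U0 / m0))"
    proof -
      have "B \<le> m0 * (ln (real d) + ln (exp 1 * U0 / m0))"
        unfolding B_def lnU using hb by (simp add: algebra_simps)
      hence "U0 / 2 * B \<le> U0 / 2 * (m0 * (ln (real d) + ln (exp 1 * U0 / m0)))"
        using U0p by (intro mult_left_mono) auto
      thus ?thesis by (simp add: algebra_simps)
    qed
    thus ?thesis by (rule real_sqrt_le_mono)
  qed
  show ?thesis
  proof (cases "x * (real d + 1) \<le> real d")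
    case True
    have xl: "x < 1"
    proof (rule ccontr)
      assume "\<not> x < 1"
      hence "x = 1" using x1 by simp
      thus False using True by simp
    qed
    have hx: "bin_entropy x > 0"
    proof -
      have "- x * ln x > 0" using x0 xl by (simp add: mult_pos_neg ln_less_zero)
      moreover have "- (1 - x) * ln (1 - x) > 0"
      proof -
        have "ln (1 - x) < 0" using x0 xl by (intro ln_less_zero) auto
        hence "0 < (1 - x) * (- ln (1 - x))" using xl by (intro mult_pos_pos) auto
        thus ?thesis by (simp add: algebra_simps)
      qed
      ultimately show ?thesis using entropy_eq[OF x0 xl] by (simp add: algebra_simps)
    qed
    have Bp: "B > 0" unfolding B_def using hx U0p m0p lnd by (simp add: add_nonneg_pos)
    define \<eta> where "\<eta> = sqrt (8 * B / U0)"
    have etap: "\<eta> > 0" unfolding \<eta>_def using Bp U0p by simp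
    have eta2: "\<eta>^2 = 8 * B / U0" unfolding \<eta>_def using Bp U0p by simp
    have Beq: "m0 * ln (real d) + m0 * ln (1/x) + (U0 - m0) * ln (1 / (1 - x)) = B"
      unfolding B_def entropy_eq[OF x0 xl] m0x using x0 xl by (simp add: ln_div algebra_simps)
    have opt: "\<eta> * U0 / 8 + B / \<eta> = sqrt (U0 / 2 * B)"
    proof -
      have "\<eta> * U0 / 8 + B / \<eta> = (\<eta>^2 * U0 + 8 * B) / (8 * \<eta>)"
        using etap by (simp add: field_simps power2_eq_square)
      also have "\<dots> = 2 * B / \<eta>" using eta2 U0p etap by (simp add: field_simps)
      finally have e: "\<eta> * U0 / 8 + B / \<eta> = 2 * B / \<eta>" .
      have "(2 * B / \<eta>)^2 = U0 / 2 * B"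
        using eta2 etap U0p Bp by (simp add: power_divide field_simps power2_eq_square)
      hence "sqrt (U0 / 2 * B) = 2 * B / \<eta>"
        by (intro real_sqrt_unique) (use Bp etap in auto)
      thus ?thesis using e by simp
    qed
    have ALL: "\<forall>T (l :: nat \<Rightarrow> nat \<Rightarrow> real) (u :: nat \<Rightarrow> nat \<Rightarrow> real).
       T \<ge> 1
       \<and> (\<forall>t\<in>{1..T}. \<forall>i<d. 0 \<le> l t i \<and> l t i \<le> 1)
       \<and> (\<forall>t\<in>{1..T}. \<forall>i<d. 0 \<le> u t i)
       \<and> norm1 d (u 1) + shifts d u T \<le> m0
       \<and> (\<Sum>t=1..T. norm1 d (u t)) \<le> U0
     \<longrightarrow>
       (\<Sum>t=1..T. norm1 d (u t) * (\<Sum>i<d. fs_pred d \<eta> x l t i * l t i))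
         - (\<Sum>t=1..T. \<Sum>i<d. u t i * l t i)
         \<le> sqrt (U0 / 2 * (m0 * ln (real d) + U0 * bin_entropy (m0 / U0)))
       \<and> sqrt (U0 / 2 * (m0 * ln (real d) + U0 * bin_entropy (m0 / U0)))
         \<le> sqrt (U0 * m0 / 2 * (ln (real d) + ln (exp 1 * U0 / m0)))"
    proof (intro allI impI conjI)
      fix T :: nat and l u :: "nat \<Rightarrow> nat \<Rightarrow> real"
      assume H: "T \<ge> 1
       \<and> (\<forall>t\<in>{1..T}. \<forall>i<d. 0 \<le> l t i \<and> l t i \<le> 1)
       \<and> (\<forall>t\<in>{1..T}. \<forall>i<d. 0 \<le> u t i)
       \<and> norm1 d (u 1) + shifts d u T \<le> m0
       \<and> (\<Sum>t=1..T. norm1 d (u t)) \<le> U0"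
      have "(\<Sum>t=1..T. norm1 d (u t) * (\<Sum>i<d. fs_pred d \<eta> x l t i * l t i))
         - (\<Sum>t=1..T. \<Sum>i<d. u t i * l t i)
         \<le> \<eta> * U0 / 8 + (m0 * ln (real d) + m0 * ln (1/x) + (U0 - m0) * ln (1 / (1 - x))) / \<eta>"
        using H by (intro main_fixed[OF d1 x0 xl etap True]) auto
      hence "(\<Sum>t=1..T. norm1 d (u t) * (\<Sum>i<d. fs_pred d \<eta> x l t i * l t i))
         - (\<Sum>t=1..T. \<Sum>i<d. u t i * l t i) \<le> sqrt (U0 / 2 * B)"
        unfolding Beq opt .
      thus "(\<Sum>t=1..T. norm1 d (u t) * (\<Sum>i<d. fs_pred d \<eta> x l t i * l t i))
         - (\<Sum>t=1..T. \<Sum>i<d. u t i * l t i)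
         \<le> sqrt (U0 / 2 * (m0 * ln (real d) + U0 * bin_entropy (m0 / U0)))"
        by (simp only: B_def x_def)
      show "sqrt (U0 / 2 * (m0 * ln (real d) + U0 * bin_entropy (m0 / U0)))
         \<le> sqrt (U0 * m0 / 2 * (ln (real d) + ln (exp 1 * U0 / m0)))"
        using SECOND by (simp add: B_def x_def)
    qed
    show ?thesis
      apply (rule exI[of _ \<eta>])
      apply (rule conjI[OF etap])
      apply (rule exI[of _ x])
      using x0 x1 ALL by simp
  next
    case False
    have xg: "real d < x * (real d + 1)" using False by simp
    have hb: "(U0 - m0) * ln (real d) \<le> U0 * bin_entropy x"
    proof (cases "x = 1")
      case True thus ?thesis using m0x by (simp add: bin_entropy_def)
    next
      case False
      hence xl: "x < 1" using x1 by simp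
      have "1 / (1 - x) \<ge> real d"
      proof -
        have "real d * (1 - x) \<le> 1" using xg x1 by (simp add: algebra_simps)
        thus ?thesis using xl by (simp add: field_simps)
      qed
      hence "ln (real d) \<le> ln (1 / (1 - x))" using d1 by (intro ln_mono) auto
      also have "\<dots> = - ln (1 - x)" using xl by (simp add: ln_div)
      finally have "(1 - x) * ln (real d) \<le> (1 - x) * (- ln (1 - x))"
        using xl by (intro mult_left_mono) auto
      moreover have "0 \<le> - x * ln x" using x0 x1 by (simp add: mult_nonneg_nonpos)
      ultimately have "(1 - x) * ln (real d) \<le> bin_entropy x"
        using entropy_eq[OF x0 xl] by simp
      hence "U0 * ((1 - x) * ln (real d)) \<le> U0 * bin_entropy x" using U0p by simp
      thus ?thesis using m0x by (simp add: algebra_simps)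
    qed
    have BU: "U0 * ln (real d) \<le> B" unfolding B_def using hb by (simp add: left_diff_distrib)
    have dd: "2 * (1 - 1 / real d)^2 \<le> ln (real d)"
    proof -
      have "2 * (real d - 1) / (real d + 1) \<le> ln (real d)" using d1 by (intro ln_lower_2) simp
      moreover have "2 * (1 - 1 / real d)^2 \<le> 2 * (real d - 1) / (real d + 1)"
      proof -
        have dp: "real d > 0" using d1 by simp
        have "(real d - 1)^2 * (real d + 1) \<le> (real d - 1) * real d ^ 2"
        proof -
          have "(real d - 1)^2 * (real d + 1) = (real d - 1) * (real d ^ 2 - 1)"
            by (simp add: power2_eq_square algebra_simps)
          also have "\<dots> \<le> (real d - 1) * real d ^ 2" using d1 by (intro mult_left_mono) auto
          finally show ?thesis .
        qed
        hence "(1 - 1 / real d)^2 \<le> (real d - 1) / (real d + 1)"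
          using dp by (simp add: field_simps power2_eq_square)
        moreover have "2 * (real d - 1) / (real d + 1) = 2 * ((real d - 1) / (real d + 1))" by simp
        ultimately show ?thesis by linarith
      qed
      ultimately show ?thesis by linarith
    qed
    have main: "(1 - 1 / real d) * U0 \<le> sqrt (U0 / 2 * B)"
    proof (rule real_le_rsqrt)
      have "((1 - 1 / real d) * U0)^2 = (1 - 1 / real d)^2 * U0 * U0" by (simp add: power2_eq_square)
      also have "\<dots> \<le> (ln (real d) / 2) * U0 * U0" using dd U0p by (intro mult_right_mono) auto
      also have "\<dots> = U0 / 2 * (U0 * ln (real d))" by simp
      also have "\<dots> \<le> U0 / 2 * B" using BU U0p by (intro mult_left_mono) auto
      finally show "((1 - 1 / real d) * U0)^2 \<le> U0 / 2 * B" .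
    qed
    have ALL1: "\<forall>T (l :: nat \<Rightarrow> nat \<Rightarrow> real) (u :: nat \<Rightarrow> nat \<Rightarrow> real).
       T \<ge> 1
       \<and> (\<forall>t\<in>{1..T}. \<forall>i<d. 0 \<le> l t i \<and> l t i \<le> 1)
       \<and> (\<forall>t\<in>{1..T}. \<forall>i<d. 0 \<le> u t i)
       \<and> norm1 d (u 1) + shifts d u T \<le> m0
       \<and> (\<Sum>t=1..T. norm1 d (u t)) \<le> U0
     \<longrightarrow>
       (\<Sum>t=1..T. norm1 d (u t) * (\<Sum>i<d. fs_pred d 1 1 l t i * l t i))
         - (\<Sum>t=1..T. \<Sum>i<d. u t i * l t i)
         \<le> sqrt (U0 / 2 * (m0 * ln (real d) + U0 * bin_entropy (m0 / U0)))
       \<and> sqrt (U0 / 2 * (m0 * ln (real d) + U0 * bin_entropy (m0 / U0)))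
         \<le> sqrt (U0 * m0 / 2 * (ln (real d) + ln (exp 1 * U0 / m0)))"
    proof (intro allI impI conjI)
      fix T :: nat and l u :: "nat \<Rightarrow> nat \<Rightarrow> real"
      assume H: "T \<ge> 1
       \<and> (\<forall>t\<in>{1..T}. \<forall>i<d. 0 \<le> l t i \<and> l t i \<le> 1)
       \<and> (\<forall>t\<in>{1..T}. \<forall>i<d. 0 \<le> u t i)
       \<and> norm1 d (u 1) + shifts d u T \<le> m0
       \<and> (\<Sum>t=1..T. norm1 d (u t)) \<le> U0"
      have "(\<Sum>t=1..T. norm1 d (u t) * (\<Sum>i<d. fs_pred d 1 1 l t i * l t i))
         - (\<Sum>t=1..T. \<Sum>i<d. u t i * l t i) \<le> (1 - 1 / real d) * U0"
        using H by (intro uniform_regret[OF d1]) auto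
      thus "(\<Sum>t=1..T. norm1 d (u t) * (\<Sum>i<d. fs_pred d 1 1 l t i * l t i))
         - (\<Sum>t=1..T. \<Sum>i<d. u t i * l t i)
         \<le> sqrt (U0 / 2 * (m0 * ln (real d) + U0 * bin_entropy (m0 / U0)))"
        using main by (simp add: B_def x_def)
      show "sqrt (U0 / 2 * (m0 * ln (real d) + U0 * bin_entropy (m0 / U0)))
         \<le> sqrt (U0 * m0 / 2 * (ln (real d) + ln (exp 1 * U0 / m0)))"
        using SECOND by (simp add: B_def x_def)
    qed
    show ?thesis
      apply (rule exI[of _ 1])
      apply (rule conjI, simp)
      apply (rule exI[of _ 1])
      using ALL1 by simp
  qed
qed

end
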